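(* Let $(V,\varphi,\xi,\eta,g)$, $\mathcal{F}$ and $p_1,\dots,p_4$ be as in the context, and let $F\in\mathcal{F}$ with associated operators $\mathcal{A}_{e_i}$ ($i=1,\dots,2n$), $\mathcal{A}_\xi$. Then, for all $X\in V$ and $i=1,\dots,2n$: (i) $\mathcal{A}_{e_i}X=h(\mathcal{A}_{e_i}hX)$ for all $i,X$ if and only if $F=p_1F$; (ii) $\mathcal{A}_{e_i}X=\eta(\mathcal{A}_{e_i}hX)\xi=-g(\mathcal{A}_\xi hX,\varphi e_i)\xi$ for all $i,X$ if and only if $F=p_2F$; (iii) $\mathcal{A}_{e_i}X=\eta(X)h(\mathcal{A}_{e_i}\xi)$ for all $i,X$ if and only if $F=p_3F$; (iv) $\mathcal{A}_{e_i}X=\eta(X)\eta(\mathcal{A}_{e_i}\xi)\xi=-\eta(X)g(\mathcal{A}_\xi\xi,\varphi e_i)\xi$ for all $i,X$ if and only if $F=p_4F$.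
   Context: Let $V$ be a real vector space of dimension $2n+1$ with an endomorphism $\varphi$, a vector $\xi$ and a linear form $\eta$ such that $\varphi\xi=0$, $\eta\circ\varphi=0$, $\eta(\xi)=1$, $\varphi^2=\mathrm{id}-\eta\otimes\xi$, and such that $\varphi$ restricted to $\mathbb{D}=\ker\eta$ has eigenvalues $\pm1$ with eigenspaces of equal dimension $n$. Let $g$ be a nondegenerate symmetric bilinear form on $V$ with $g(\varphi X,\varphi Y)=-g(X,Y)+\eta(X)\eta(Y)$; then $\eta(X)=g(X,\xi)$. Write $hX=X-\eta(X)\xi$. Fix a basis $\{e_1,\dots,e_{2n}\}$ of $\mathbb{D}$ and write $Y=Y^ie_i+\eta(Y)\xi$. Let $\mathcal{F}$ be the vector space of all $(0,3)$-tensors of the form $F(X,Y,Z)=Y^ig(\mathcal{A}_{e_i}X,Z)+\eta(Y)g(\mathcal{A}_\xi X,\varphi Z)$, where $\mathcal{A}_{e_i}:V\to V$ and $\mathcal{A}_\xi:V\to\mathbb{D}$ are linear maps (the operators associated with $F$) satisfying for all $X$, $i,j$: $g(\mathcal{A}_{e_i}X,e_j)=-g(\mathcal{A}_{e_j}X,e_i)$; $\mathcal{A}_{\varphi e_i}X=-\varphi(\mathcal{A}_{e_i}X)-g(\mathcal{A}_\xi X,e_i)\xi$ (index extended linearly); $\eta(\mathcal{A}_{e_i}X)=-g(\mathcal{A}_\xi X,\varphi e_i)$; $\eta(\mathcal{A}_\xi X)=0$. Define $p_1(F)(X,Y,Z)=F(hX,hY,hZ)$; $p_2(F)(X,Y,Z)=-\eta(Y)F(hX,hZ,\xi)+\eta(Z)F(hX,hY,\xi)$;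 $p_3(F)(X,Y,Z)=\eta(X)F(\xi,hY,hZ)$; $p_4(F)(X,Y,Z)=\eta(X)\eta(Y)F(\xi,\xi,hZ)-\eta(X)\eta(Z)F(\xi,\xi,hY)$. *)

theory Defs
  imports "HOL-Analysis.Analysis"
begin

definition hproj :: "('v::real_vector \<Rightarrow> real) \<Rightarrow> 'v \<Rightarrow> 'v \<Rightarrow> 'v" where
  "hproj \<eta> \<xi> X = X - \<eta> X *\<^sub>R \<xi>"

definition coord :: "nat \<Rightarrow> (nat \<Rightarrow> 'v::real_vector) \<Rightarrow> ('v \<Rightarrow> real) \<Rightarrow> 'v \<Rightarrow> 'v \<Rightarrow> nat \<Rightarrow> real" where
  "coord n e \<eta> \<xi> Y i = representation (e ` {1..2*n}) (hproj \<eta> \<xi> Y) (e i)"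

text \<open>Operator A_Y for Y in V obtained by extending the index i of A_{e_i} linearly.\<close>
definition Aop :: "nat \<Rightarrow> (nat \<Rightarrow> 'v::real_vector) \<Rightarrow> ('v \<Rightarrow> real) \<Rightarrow> 'v
    \<Rightarrow> (nat \<Rightarrow> 'v \<Rightarrow> 'v) \<Rightarrow> 'v \<Rightarrow> 'v \<Rightarrow> 'v" where
  "Aop n e \<eta> \<xi> A Y X = (\<Sum>j\<in>{1..2*n}. coord n e \<eta> \<xi> Y j *\<^sub>R A j X)"

definition Ften :: "nat \<Rightarrow> (nat \<Rightarrow> 'v::real_vector) \<Rightarrow> ('v \<Rightarrow> real) \<Rightarrow> 'v
    \<Rightarrow> ('v \<Rightarrow> 'v) \<Rightarrow> ('v \<Rightarrow> 'v \<Rightarrow> real)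
    \<Rightarrow> (nat \<Rightarrow> 'v \<Rightarrow> 'v) \<Rightarrow> ('v \<Rightarrow> 'v) \<Rightarrow> 'v \<Rightarrow> 'v \<Rightarrow> 'v \<Rightarrow> real" where
  "Ften n e \<eta> \<xi> \<phi> g A A\<xi> X Y Z =
     (\<Sum>i\<in>{1..2*n}. coord n e \<eta> \<xi> Y i * g (A i X) Z) + \<eta> Y * g (A\<xi> X) (\<phi> Z)"

definition p1 :: "('v::real_vector \<Rightarrow> real) \<Rightarrow> 'v \<Rightarrow> ('v \<Rightarrow> 'v \<Rightarrow> 'v \<Rightarrow> real) \<Rightarrow> 'v \<Rightarrow> 'v \<Rightarrow> 'v \<Rightarrow> real" where
  "p1 \<eta> \<xi> F X Y Z = F (hproj \<eta> \<xi> X) (hproj \<eta> \<xi> Y) (hproj \<eta> \<xi> Z)"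

definition p2 :: "('v::real_vector \<Rightarrow> real) \<Rightarrow> 'v \<Rightarrow> ('v \<Rightarrow> 'v \<Rightarrow> 'v \<Rightarrow> real) \<Rightarrow> 'v \<Rightarrow> 'v \<Rightarrow> 'v \<Rightarrow> real" where
  "p2 \<eta> \<xi> F X Y Z = - \<eta> Y * F (hproj \<eta> \<xi> X) (hproj \<eta> \<xi> Z) \<xi>
                      + \<eta> Z * F (hproj \<eta> \<xi> X) (hproj \<eta> \<xi> Y) \<xi>"

definition p3 :: "('v::real_vector \<Rightarrow> real) \<Rightarrow> 'v \<Rightarrow> ('v \<Rightarrow> 'v \<Rightarrow> 'v \<Rightarrow> real) \<Rightarrow> 'v \<Rightarrow> 'v \<Rightarrow> 'v \<Rightarrow> real" where
  "p3 \<eta> \<xi> F X Y Z = \<eta> X * F \<xi> (hproj \<eta> \<xi> Y) (hproj \<eta> \<xi> Z)"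

definition p4 :: "('v::real_vector \<Rightarrow> real) \<Rightarrow> 'v \<Rightarrow> ('v \<Rightarrow> 'v \<Rightarrow> 'v \<Rightarrow> real) \<Rightarrow> 'v \<Rightarrow> 'v \<Rightarrow> 'v \<Rightarrow> real" where
  "p4 \<eta> \<xi> F X Y Z = \<eta> X * \<eta> Y * F \<xi> \<xi> (hproj \<eta> \<xi> Z)
                      - \<eta> X * \<eta> Z * F \<xi> \<xi> (hproj \<eta> \<xi> Y)"

end

theory Submission
  imports Defs
begin

theorem proposition2p2:
  fixes n :: nat and \<phi> :: "'v::real_vector \<Rightarrow> 'v" and \<xi> :: 'v and \<eta> :: "'v \<Rightarrow> real"
    and g :: "'v \<Rightarrow> 'v \<Rightarrow> real" and e :: "nat \<Rightarrow> 'v"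
    and A :: "nat \<Rightarrow> 'v \<Rightarrow> 'v" and A\<xi> :: "'v \<Rightarrow> 'v"
  assumes dimV: "dim (UNIV :: 'v set) = 2*n + 1"
    and lin_phi: "linear \<phi>" and lin_eta: "linear \<eta>"
    and phi_xi: "\<phi> \<xi> = 0" and eta_phi: "\<And>X. \<eta> (\<phi> X) = 0" and eta_xi: "\<eta> \<xi> = 1"
    and phi2: "\<And>X. \<phi> (\<phi> X) = X - \<eta> X *\<^sub>R \<xi>"
    and eig_plus: "dim {X. \<eta> X = 0 \<and> \<phi> X = X} = n"
    and eig_minus: "dim {X. \<eta> X = 0 \<and> \<phi> X = - X} = n"
    and g_bil: "bilinear g" and g_sym: "\<And>X Y. g X Y = g Y X"
    and g_nondeg: "\<And>X. (\<forall>Y. g X Y = 0) \<Longrightarrow> X = 0"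
    and g_phi: "\<And>X Y. g (\<phi> X) (\<phi> Y) = - g X Y + \<eta> X * \<eta> Y"
    and e_inj: "inj_on e {1..2*n}"
    and e_indep: "independent (e ` {1..2*n})"
    and e_span: "span (e ` {1..2*n}) = {X. \<eta> X = 0}"
    and A_lin: "\<And>i. i \<in> {1..2*n} \<Longrightarrow> linear (A i)"
    and Axi_lin: "linear A\<xi>"
    and A_skew: "\<And>X i j. i \<in> {1..2*n} \<Longrightarrow> j \<in> {1..2*n} \<Longrightarrow>
                  g (A i X) (e j) = - g (A j X) (e i)"
    and A_phi: "\<And>X i. i \<in> {1..2*n} \<Longrightarrow>
                  Aop n e \<eta> \<xi> A (\<phi> (e i)) X = - \<phi> (A i X) - g (A\<xi> X) (e i) *\<^sub>R \<xi>"
    and A_eta: "\<And>X i. i \<in> {1..2*n} \<Longrightarrow> \<eta> (A i X) = - g (A\<xi> X) (\<phi> (e i))"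
    and Axi_eta: "\<And>X. \<eta> (A\<xi> X) = 0"
  defines "F \<equiv> Ften n e \<eta> \<xi> \<phi> g A A\<xi>"
    and "h \<equiv> hproj \<eta> \<xi>"
  shows
    "((\<forall>i\<in>{1..2*n}. \<forall>X. A i X = h (A i (h X))) \<longleftrightarrow> F = p1 \<eta> \<xi> F)
   \<and> ((\<forall>i\<in>{1..2*n}. \<forall>X. A i X = \<eta> (A i (h X)) *\<^sub>R \<xi>
          \<and> \<eta> (A i (h X)) *\<^sub>R \<xi> = - g (A\<xi> (h X)) (\<phi> (e i)) *\<^sub>R \<xi>) \<longleftrightarrow> F = p2 \<eta> \<xi> F)
   \<and> ((\<forall>i\<in>{1..2*n}. \<forall>X. A i X = \<eta> X *\<^sub>R h (A i \<xi>)) \<longleftrightarrow> F = p3 \<eta> \<xi> F)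
   \<and> ((\<forall>i\<in>{1..2*n}. \<forall>X. A i X = (\<eta> X * \<eta> (A i \<xi>)) *\<^sub>R \<xi>
          \<and> (\<eta> X * \<eta> (A i \<xi>)) *\<^sub>R \<xi> = - (\<eta> X * g (A\<xi> \<xi>) (\<phi> (e i))) *\<^sub>R \<xi>)
        \<longleftrightarrow> F = p4 \<eta> \<xi> F)"
proof -
  let ?I = "{1..2*n}"
  let ?c = "coord n e \<eta> \<xi>"
  have gl: "g (x + y) z = g x z + g y z" "g z (x + y) = g z x + g z y"
    "g (a *\<^sub>R x) z = a * g x z" "g z (a *\<^sub>R x) = a * g z x"
    "g (x - y) z = g x z - g y z" "g z (x - y) = g z x - g z y"
    "g 0 z = 0" "g z 0 = 0" "g (- x) z = - g x z" "g z (- x) = - g z x"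
    for x y z a
    using g_bil by (simp_all add: bilinear_ladd bilinear_radd bilinear_lmul bilinear_rmul
        bilinear_lsub bilinear_rsub bilinear_lzero bilinear_rzero bilinear_lneg bilinear_rneg)
  have etal: "\<eta> (x + y) = \<eta> x + \<eta> y" "\<eta> (a *\<^sub>R x) = a * \<eta> x" "\<eta> (x - y) = \<eta> x - \<eta> y"
    "\<eta> 0 = 0" for x y a
    using lin_eta by (simp_all add: linear_add linear_scale linear_diff linear_0)
  have phil: "\<phi> (x - y) = \<phi> x - \<phi> y" "\<phi> (a *\<^sub>R x) = a *\<^sub>R \<phi> x" for x y a
    using lin_phi by (simp_all add: linear_diff linear_scale)
  have gxi: "g X \<xi> = \<eta> X" for X
    using g_phi[of X \<xi>] by (simp add: phi_xi gl eta_xi)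
  have gxi2: "g \<xi> X = \<eta> X" for X using gxi g_sym by metis
  have h_eq: "h X = X - \<eta> X *\<^sub>R \<xi>" for X by (simp add: h_def hproj_def)
  have eta_h: "\<eta> (h X) = 0" for X by (simp add: h_eq etal eta_xi)
  have hh: "h (h X) = h X" for X by (simp add: h_eq[of "h X"] eta_h)
  have h_xi: "h \<xi> = 0" by (simp add: h_eq eta_xi)
  have phi_h: "\<phi> (h X) = \<phi> X" for X by (simp add: h_eq phil phi_xi)
  have gself: "g (h U) Z = g U (h Z)" for U Z
    by (simp add: h_eq gl gxi gxi2)
  have gself2: "g (h U) Z = g (h U) (h Z)" for U Z
    using gself[of "h U" Z] hh by simp
  have geq: "U = W" if "\<And>Z. g U Z = g W Z" for U W
  proof -
    have "\<forall>Z. g (U - W) Z = 0" using that by (simp add: gl)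
    then have "U - W = 0" by (rule g_nondeg)
    then show ?thesis by simp
  qed
  have e_eta: "\<eta> (e j) = 0" if "j \<in> ?I" for j
    using e_span that span_base[of "e j" "e ` ?I"] by auto
  have c_h: "?c (h Y) = ?c Y" for Y
    using hh by (simp add: coord_def fun_eq_iff h_def)
  have c_xi: "?c \<xi> i = 0" for i
    by (simp add: coord_def h_xi[unfolded h_def] representation_zero)
  have c_e: "?c (e j) i = (if i = j then 1 else 0)" if "j \<in> ?I" "i \<in> ?I" for i j
  proof -
    have "hproj \<eta> \<xi> (e j) = e j" using e_eta[OF that(1)] by (simp add: hproj_def)
    then have "?c (e j) i = (if e i = e j then 1 else 0)"
      unfolding coord_def using representation_basis[OF e_indep, of "e j"] that by simp
    also have "\<dots> = (if i = j then 1 else 0)" using e_inj that by (auto dest: inj_onD)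
    finally show ?thesis .
  qed
  have sum_e: "(\<Sum>i\<in>?I. ?c (e j) i * f i) = f j" if "j \<in> ?I" for j and f :: "nat \<Rightarrow> real"
  proof -
    have "(\<Sum>i\<in>?I. ?c (e j) i * f i) = (\<Sum>i\<in>?I. if i = j then f i else 0)"
      using c_e[OF that] by (intro sum.cong) auto
    also have "\<dots> = f j" using that by simp
    finally show ?thesis .
  qed
  have expand: "(\<Sum>i\<in>?I. ?c Z i *\<^sub>R e i) = h Z" for Z
  proof -
    have "h Z \<in> span (e ` ?I)" using e_span eta_h by auto
    then have "(\<Sum>b\<in>e ` ?I. representation (e ` ?I) (h Z) b *\<^sub>R b) = h Z"
      using sum_representation_eq[OF e_indep] by auto
    then show ?thesis
      unfolding sum.reindex[OF e_inj] o_def coord_def h_def .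
  qed
  have lin_exp: "(\<Sum>i\<in>?I. ?c Z i * l (e i)) = l (h Z)" if "linear l" for Z and l :: "'v \<Rightarrow> real"
  proof -
    have "l (h Z) = l (\<Sum>i\<in>?I. ?c Z i *\<^sub>R e i)" unfolding expand ..
    also have "\<dots> = (\<Sum>i\<in>?I. ?c Z i * l (e i))"
      using that by (simp add: linear_sum linear_scale)
    finally show ?thesis by simp
  qed
  have glin: "linear (\<lambda>v. g W (\<phi> v))" for W
    using g_bil lin_phi unfolding bilinear_def by (auto intro: linear_compose[unfolded o_def])
  have T: "(\<Sum>i\<in>?I. ?c Z i * \<eta> (A i W)) = - g (A\<xi> W) (\<phi> Z)" for Z W
  proof -
    have "(\<Sum>i\<in>?I. ?c Z i * \<eta> (A i W)) = (\<Sum>i\<in>?I. - (?c Z i * g (A\<xi> W) (\<phi> (e i))))"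
      by (rule sum.cong) (auto simp: A_eta)
    also have "\<dots> = - g (A\<xi> W) (\<phi> (h Z))"
      using lin_exp[OF glin, of Z "A\<xi> W"] by (simp add: sum_negf)
    finally show ?thesis by (simp add: phi_h)
  qed
  have U: "g W (\<phi> Z) = 0" if "\<And>i. i \<in> ?I \<Longrightarrow> g W (\<phi> (e i)) = 0" for W Z
  proof -
    have "g W (\<phi> (h Z)) = (\<Sum>i\<in>?I. ?c Z i * g W (\<phi> (e i)))"
      using lin_exp[OF glin, of Z W] by simp
    also have "\<dots> = 0" using that by simp
    finally show ?thesis by (simp add: phi_h)
  qed
  have Fd: "F X Y Z = (\<Sum>i\<in>?I. ?c Y i * g (A i X) Z) + \<eta> Y * g (A\<xi> X) (\<phi> Z)" for X Y Z
    by (simp add: F_def Ften_def)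
  have Fe: "F X (e j) Z = g (A j X) Z" if "j \<in> ?I" for X Z j
    using that sum_e[OF that, of "\<lambda>i. g (A i X) Z"] by (simp add: Fd e_eta)
  have Fh: "F X (h Y) Z = (\<Sum>i\<in>?I. ?c Y i * g (A i X) Z)" for X Y Z
    by (simp add: Fd c_h eta_h)
  have Fxi: "F X \<xi> Z = g (A\<xi> X) (\<phi> Z)" for X Z
    by (simp add: Fd c_xi eta_xi)
  have he: "h (e j) = e j" if "j \<in> ?I" for j using e_eta[OF that] by (simp add: h_eq)
  have Axi_dec: "A\<xi> X = A\<xi> (h X) + \<eta> X *\<^sub>R A\<xi> \<xi>" for X
    using Axi_lin by (simp add: h_eq linear_diff linear_scale)
  have A0: "A i 0 = 0" if "i \<in> ?I" for i using A_lin[OF that] by (simp add: linear_0)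
  have P1: "(\<forall>i\<in>?I. \<forall>X. A i X = h (A i (h X))) \<longleftrightarrow> F = p1 \<eta> \<xi> F"
  proof
    assume H: "\<forall>i\<in>?I. \<forall>X. A i X = h (A i (h X))"
    have z: "g (A\<xi> X) (\<phi> Z) = 0" for X Z
    proof (rule U)
      fix i assume i: "i \<in> ?I"
      have "\<eta> (A i X) = 0" using H i eta_h by metis
      then show "g (A\<xi> X) (\<phi> (e i)) = 0" using A_eta[OF i, of X] by simp
    qed
    show "F = p1 \<eta> \<xi> F"
    proof (intro ext)
      fix X Y Z
      have "F X Y Z = (\<Sum>i\<in>?I. ?c Y i * g (A i (h X)) (h Z))"
      proof -
        have "g (A i X) Z = g (A i (h X)) (h Z)" if i: "i \<in> ?I" for i
        proof -
          have "A i X = h (A i (h X))" using H i by blast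
          then show ?thesis by (simp add: gself)
        qed
        then show ?thesis unfolding Fd z mult_zero_right add_0_right by (intro sum.cong refl) auto
      qed
      also have "\<dots> = p1 \<eta> \<xi> F X Y Z"
        by (simp add: p1_def h_def[symmetric] Fh)
      finally show "F X Y Z = p1 \<eta> \<xi> F X Y Z" .
    qed
  next
    assume E: "F = p1 \<eta> \<xi> F"
    show "\<forall>i\<in>?I. \<forall>X. A i X = h (A i (h X))"
    proof (intro ballI allI geq)
      fix i X Z assume i: "i \<in> ?I"
      have "g (A i X) Z = F X (e i) Z" using Fe[OF i] by simp
      also have "\<dots> = p1 \<eta> \<xi> F X (e i) Z" using E by simp
      also have "\<dots> = F (h X) (e i) (h Z)" by (simp add: p1_def h_def[symmetric] he[OF i])
      also have "\<dots> = g (h (A i (h X))) Z" using Fe[OF i] gself by simp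
      finally show "g (A i X) Z = g (h (A i (h X))) Z" .
    qed
  qed
  have P2: "(\<forall>i\<in>?I. \<forall>X. A i X = \<eta> (A i (h X)) *\<^sub>R \<xi>
          \<and> \<eta> (A i (h X)) *\<^sub>R \<xi> = - g (A\<xi> (h X)) (\<phi> (e i)) *\<^sub>R \<xi>) \<longleftrightarrow> F = p2 \<eta> \<xi> F"
  proof
    assume H: "\<forall>i\<in>?I. \<forall>X. A i X = \<eta> (A i (h X)) *\<^sub>R \<xi>
          \<and> \<eta> (A i (h X)) *\<^sub>R \<xi> = - g (A\<xi> (h X)) (\<phi> (e i)) *\<^sub>R \<xi>"
    have Ai: "A i X = \<eta> (A i (h X)) *\<^sub>R \<xi>" if "i \<in> ?I" for i X using H that by blast
    have z: "g (A\<xi> \<xi>) (\<phi> Z) = 0" for Z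
    proof (rule U)
      fix i assume i: "i \<in> ?I"
      have "A i \<xi> = 0" using Ai[OF i, of \<xi>] by (simp add: h_xi A0[OF i] etal)
      then show "g (A\<xi> \<xi>) (\<phi> (e i)) = 0" using A_eta[OF i, of \<xi>] by (simp add: etal)
    qed
    have ax: "g (A\<xi> X) (\<phi> Z) = g (A\<xi> (h X)) (\<phi> Z)" for X Z
      by (subst Axi_dec) (simp add: gl z)
    show "F = p2 \<eta> \<xi> F"
    proof (intro ext)
      fix X Y Z
      have "F X Y Z = (\<Sum>i\<in>?I. ?c Y i * (\<eta> (A i (h X)) * \<eta> Z)) + \<eta> Y * g (A\<xi> (h X)) (\<phi> Z)"
      proof -
        have "g (A i X) Z = \<eta> (A i (h X)) * \<eta> Z" if i: "i \<in> ?I" for i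
        proof -
          have "A i X = \<eta> (A i (h X)) *\<^sub>R \<xi>" using Ai i by blast
          then show ?thesis by (simp add: gl gxi2)
        qed
        then show ?thesis unfolding Fd ax[of X Z] by (intro arg_cong2[where f="(+)"] sum.cong) auto
      qed
      also have "\<dots> = \<eta> Z * (\<Sum>i\<in>?I. ?c Y i * \<eta> (A i (h X))) + \<eta> Y * g (A\<xi> (h X)) (\<phi> Z)"
        by (simp add: sum_distrib_left mult_ac)
      also have "\<dots> = p2 \<eta> \<xi> F X Y Z"
        using T[of Z "h X"] T[of Y "h X"] by (simp add: p2_def h_def[symmetric] Fh gxi)
      finally show "F X Y Z = p2 \<eta> \<xi> F X Y Z" .
    qed
  next
    assume E: "F = p2 \<eta> \<xi> F"
    show "\<forall>i\<in>?I. \<forall>X. A i X = \<eta> (A i (h X)) *\<^sub>R \<xi>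
          \<and> \<eta> (A i (h X)) *\<^sub>R \<xi> = - g (A\<xi> (h X)) (\<phi> (e i)) *\<^sub>R \<xi>"
    proof (intro ballI allI conjI)
      fix i X assume i: "i \<in> ?I"
      show "A i X = \<eta> (A i (h X)) *\<^sub>R \<xi>"
      proof (rule geq)
      fix Z
      have "g (A i X) Z = F X (e i) Z" using Fe[OF i] by simp
      also have "\<dots> = p2 \<eta> \<xi> F X (e i) Z" using E by simp
      also have "\<dots> = \<eta> Z * F (h X) (e i) \<xi>" by (simp add: p2_def h_def[symmetric] he[OF i] e_eta[OF i])
      also have "\<dots> = g (\<eta> (A i (h X)) *\<^sub>R \<xi>) Z" using Fe[OF i] by (simp add: gl gxi gxi2)
      finally show "g (A i X) Z = g (\<eta> (A i (h X)) *\<^sub>R \<xi>) Z" .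
      qed
    next
      fix i X assume i: "i \<in> ?I"
      show "\<eta> (A i (h X)) *\<^sub>R \<xi> = - g (A\<xi> (h X)) (\<phi> (e i)) *\<^sub>R \<xi>" using A_eta[OF i] by simp
    qed
  qed
  have P3: "(\<forall>i\<in>?I. \<forall>X. A i X = \<eta> X *\<^sub>R h (A i \<xi>)) \<longleftrightarrow> F = p3 \<eta> \<xi> F"
  proof
    assume H: "\<forall>i\<in>?I. \<forall>X. A i X = \<eta> X *\<^sub>R h (A i \<xi>)"
    have z: "g (A\<xi> X) (\<phi> Z) = 0" for X Z
    proof (rule U)
      fix i assume i: "i \<in> ?I"
      have "\<eta> (A i X) = 0" using H i eta_h by (metis etal(2) mult_zero_right)
      then show "g (A\<xi> X) (\<phi> (e i)) = 0" using A_eta[OF i, of X] by simp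
    qed
    show "F = p3 \<eta> \<xi> F"
    proof (intro ext)
      fix X Y Z
      have "F X Y Z = (\<Sum>i\<in>?I. ?c Y i * (\<eta> X * g (A i \<xi>) (h Z)))"
      proof -
        have "g (A i X) Z = \<eta> X * g (A i \<xi>) (h Z)" if i: "i \<in> ?I" for i
        proof -
          have "A i X = \<eta> X *\<^sub>R h (A i \<xi>)" using H i by blast
          then show ?thesis by (simp add: gl gself)
        qed
        then show ?thesis unfolding Fd z mult_zero_right add_0_right by (intro sum.cong refl) auto
      qed
      also have "\<dots> = p3 \<eta> \<xi> F X Y Z"
        by (simp add: p3_def h_def[symmetric] Fh sum_distrib_left mult_ac)
      finally show "F X Y Z = p3 \<eta> \<xi> F X Y Z" .
    qed
  next
    assume E: "F = p3 \<eta> \<xi> F"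
    show "\<forall>i\<in>?I. \<forall>X. A i X = \<eta> X *\<^sub>R h (A i \<xi>)"
    proof (intro ballI allI geq)
      fix i X Z assume i: "i \<in> ?I"
      have "g (A i X) Z = F X (e i) Z" using Fe[OF i] by simp
      also have "\<dots> = p3 \<eta> \<xi> F X (e i) Z" using E by simp
      also have "\<dots> = \<eta> X * F \<xi> (e i) (h Z)" by (simp add: p3_def h_def[symmetric] he[OF i])
      also have "\<dots> = g (\<eta> X *\<^sub>R h (A i \<xi>)) Z" using Fe[OF i] gself by (simp add: gl)
      finally show "g (A i X) Z = g (\<eta> X *\<^sub>R h (A i \<xi>)) Z" .
    qed
  qed
  have P4: "(\<forall>i\<in>?I. \<forall>X. A i X = (\<eta> X * \<eta> (A i \<xi>)) *\<^sub>R \<xi>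
          \<and> (\<eta> X * \<eta> (A i \<xi>)) *\<^sub>R \<xi> = - (\<eta> X * g (A\<xi> \<xi>) (\<phi> (e i))) *\<^sub>R \<xi>)
        \<longleftrightarrow> F = p4 \<eta> \<xi> F"
  proof
    assume H: "\<forall>i\<in>?I. \<forall>X. A i X = (\<eta> X * \<eta> (A i \<xi>)) *\<^sub>R \<xi>
          \<and> (\<eta> X * \<eta> (A i \<xi>)) *\<^sub>R \<xi> = - (\<eta> X * g (A\<xi> \<xi>) (\<phi> (e i))) *\<^sub>R \<xi>"
    have Ai: "A i X = (\<eta> X * \<eta> (A i \<xi>)) *\<^sub>R \<xi>" if "i \<in> ?I" for i X using H that by blast
    have z: "g (A\<xi> (h X)) (\<phi> Z) = 0" for X Z
    proof (rule U)
      fix i assume i: "i \<in> ?I"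
      have "A i (h X) = 0" using Ai[OF i, of "h X"] by (simp add: eta_h)
      then show "g (A\<xi> (h X)) (\<phi> (e i)) = 0" using A_eta[OF i, of "h X"] by (simp add: etal)
    qed
    have ax: "g (A\<xi> X) (\<phi> Z) = \<eta> X * g (A\<xi> \<xi>) (\<phi> Z)" for X Z
      by (subst Axi_dec) (simp add: gl z)
    show "F = p4 \<eta> \<xi> F"
    proof (intro ext)
      fix X Y Z
      have "F X Y Z = (\<Sum>i\<in>?I. ?c Y i * (\<eta> X * \<eta> (A i \<xi>) * \<eta> Z)) + \<eta> Y * (\<eta> X * g (A\<xi> \<xi>) (\<phi> Z))"
      proof -
        have "g (A i X) Z = \<eta> X * \<eta> (A i \<xi>) * \<eta> Z" if i: "i \<in> ?I" for i
        proof -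
          have "A i X = (\<eta> X * \<eta> (A i \<xi>)) *\<^sub>R \<xi>" using Ai i by blast
          then show ?thesis by (simp add: gl gxi2)
        qed
        then show ?thesis unfolding Fd ax[of X Z] by (intro arg_cong2[where f="(+)"] sum.cong) auto
      qed
      also have "\<dots> = (\<eta> X * \<eta> Z) * (\<Sum>i\<in>?I. ?c Y i * \<eta> (A i \<xi>)) + \<eta> Y * (\<eta> X * g (A\<xi> \<xi>) (\<phi> Z))"
        by (simp add: sum_distrib_left mult_ac)
      also have "\<dots> = p4 \<eta> \<xi> F X Y Z"
        using T[of Y \<xi>] by (simp add: p4_def h_def[symmetric] Fxi phi_h algebra_simps)
      finally show "F X Y Z = p4 \<eta> \<xi> F X Y Z" .
    qed
  next
    assume E: "F = p4 \<eta> \<xi> F"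
    show "\<forall>i\<in>?I. \<forall>X. A i X = (\<eta> X * \<eta> (A i \<xi>)) *\<^sub>R \<xi>
          \<and> (\<eta> X * \<eta> (A i \<xi>)) *\<^sub>R \<xi> = - (\<eta> X * g (A\<xi> \<xi>) (\<phi> (e i))) *\<^sub>R \<xi>"
    proof (intro ballI allI conjI)
      fix i X assume i: "i \<in> ?I"
      show "A i X = (\<eta> X * \<eta> (A i \<xi>)) *\<^sub>R \<xi>"
      proof (rule geq)
      fix Z
      have "g (A i X) Z = F X (e i) Z" using Fe[OF i] by simp
      also have "\<dots> = p4 \<eta> \<xi> F X (e i) Z" using E by simp
      also have "\<dots> = - (\<eta> X * \<eta> Z * g (A\<xi> \<xi>) (\<phi> (e i)))"
        by (simp add: p4_def h_def[symmetric] he[OF i] e_eta[OF i] Fxi)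
      also have "\<dots> = g ((\<eta> X * \<eta> (A i \<xi>)) *\<^sub>R \<xi>) Z" using A_eta[OF i, of \<xi>] by (simp add: gl gxi2)
      finally show "g (A i X) Z = g ((\<eta> X * \<eta> (A i \<xi>)) *\<^sub>R \<xi>) Z" .
      qed
    next
      fix i X assume i: "i \<in> ?I"
      show "(\<eta> X * \<eta> (A i \<xi>)) *\<^sub>R \<xi> = - (\<eta> X * g (A\<xi> \<xi>) (\<phi> (e i))) *\<^sub>R \<xi>"
        using A_eta[OF i] by simp
    qed
  qed
  show ?thesis using P1 P2 P3 P4 by blast
qed

end
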